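(* Let $\mathbf A$ be a modular pseudo-Kleene lattice and $x,y\in A$. The following are equivalent: (1) $x\,\mathrm C\,y$; (2) $y\,\mathrm C\,x$; (3) $x\,\mathrm C\,y'$; (4) $x'\,\mathrm C\,y$; (5) $x\,\mathrm C\,y$ and $(x\lor x')\land(y\lor y')=((x\lor x')\land y)\lor((x\lor x')\land y')$.
   Context: A pseudo-Kleene lattice is an algebra $(A,\land,\lor,{}',0,1)$ that is a bounded lattice with an antitone involution ${}'$ ($x\leq y\Rightarrow y'\leq x'$, $x''=x$) satisfying $x\land x'\leq y\lor y'$; it is modular if its lattice reduct is modular. For $a,b\in A$, $a\,\mathrm C\,b$ means: (C1) $a\land(b\lor b')=(a\land b)\lor(a\land b')$; (C2) $b\land(a\lor a')=(b\land a)\lor(b\land a')$; (C3) $a\land a'=((a\land a')\land b)\lor((a\land a')\land b')$. *)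

theory Defs
  imports Main
begin

class pseudo_kleene_lattice = bounded_lattice +
  fixes cmpl :: "'a \<Rightarrow> 'a"
  assumes cmpl_antitone: "x \<le> y \<Longrightarrow> cmpl y \<le> cmpl x"
    and cmpl_involutive: "cmpl (cmpl x) = x"
    and kleene_cond: "inf x (cmpl x) \<le> sup y (cmpl y)"

class modular_pseudo_kleene_lattice = pseudo_kleene_lattice +
  assumes modular: "x \<le> z \<Longrightarrow> sup x (inf y z) = inf (sup x y) z"

definition commutes :: "'a::pseudo_kleene_lattice \<Rightarrow> 'a \<Rightarrow> bool" where
  "commutes a b \<longleftrightarrow>
     inf a (sup b (cmpl b)) = sup (inf a b) (inf a (cmpl b))
   \<and> inf b (sup a (cmpl a)) = sup (inf b a) (inf b (cmpl a))
   \<and> inf a (cmpl a) = sup (inf (inf a (cmpl a)) b) (inf (inf a (cmpl a)) (cmpl b))"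

end

theory Submission
  imports Defs
begin
context modular_pseudo_kleene_lattice begin

lemma dm1: "cmpl (sup x y) = inf (cmpl x) (cmpl y)"
proof (rule order.antisym)
  have "cmpl (sup x y) \<le> cmpl x" by (rule cmpl_antitone) simp
  moreover have "cmpl (sup x y) \<le> cmpl y" by (rule cmpl_antitone) simp
  ultimately show "cmpl (sup x y) \<le> inf (cmpl x) (cmpl y)" by (rule le_infI)
next
  have "cmpl (cmpl x) \<le> cmpl (inf (cmpl x) (cmpl y))" by (rule cmpl_antitone) simp
  hence 1: "x \<le> cmpl (inf (cmpl x) (cmpl y))" by (simp only: cmpl_involutive)
  have "cmpl (cmpl y) \<le> cmpl (inf (cmpl x) (cmpl y))" by (rule cmpl_antitone) simp
  hence 2: "y \<le> cmpl (inf (cmpl x) (cmpl y))" by (simp only: cmpl_involutive)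
  from 1 2 have "sup x y \<le> cmpl (inf (cmpl x) (cmpl y))" by (rule le_supI)
  hence "cmpl (cmpl (inf (cmpl x) (cmpl y))) \<le> cmpl (sup x y)" by (rule cmpl_antitone)
  thus "inf (cmpl x) (cmpl y) \<le> cmpl (sup x y)" by (simp only: cmpl_involutive)
qed
lemma dm2: "cmpl (inf x y) = sup (cmpl x) (cmpl y)"
proof -
  have "cmpl (sup (cmpl x) (cmpl y)) = inf x y" by (simp only: dm1 cmpl_involutive)
  hence "cmpl (cmpl (sup (cmpl x) (cmpl y))) = cmpl (inf x y)" by simp
  thus ?thesis by (simp only: cmpl_involutive)
qed

lemma DS:
  assumes "inf x (sup y z) = sup (inf x y) (inf x z)"
  shows "inf y (sup x z) = sup (inf y x) (inf y z)"
proof -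
  have h1: "inf (sup z x) (sup y z) = sup z (inf x (sup y z))"
    using modular[of z "sup y z" x] by simp
  have yy: "inf y (sup y z) = y" by simp
  have "inf y (sup x z) = inf y (inf (sup z x) (sup y z))"
    by (metis yy inf_assoc inf_commute sup_commute)
  also have "\<dots> = inf y (sup z (sup (inf x y) (inf x z)))" using h1 assms by simp
  also have "sup z (sup (inf x y) (inf x z)) = sup (inf x y) z"
    by (metis inf.cobounded2 sup.absorb_iff2 sup_assoc sup_commute sup_left_commute)
  also have "inf y (sup (inf x y) z) = sup (inf x y) (inf z y)"
    using modular[of "inf x y" y z] by (simp add: inf_commute)
  finally show ?thesis by (simp add: inf_commute)
qed

lemma DD:
  assumes "inf x (sup y z) = sup (inf x y) (inf x z)"
  shows "sup x (inf y z) = inf (sup x y) (sup x z)"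
proof -
  have "inf (sup x y) (sup x z) = sup x (inf y (sup x z))"
    using modular[of x "sup x z" y] by simp
  also have "\<dots> = sup x (sup (inf y x) (inf y z))" using DS[OF assms] by simp
  also have "\<dots> = sup x (inf y z)"
    by (metis inf.cobounded2 sup.absorb_iff2 sup_assoc sup_commute sup_left_commute)
  finally show ?thesis by simp
qed

lemma DDd:
  assumes "sup x (inf y z) = inf (sup x y) (sup x z)"
  shows "inf x (sup y z) = sup (inf x y) (inf x z)"
proof -
  have "cmpl (sup x (inf y z)) = cmpl (inf (sup x y) (sup x z))" using assms by simp
  hence "inf (cmpl x) (sup (cmpl y) (cmpl z)) = sup (inf (cmpl x) (cmpl y)) (inf (cmpl x) (cmpl z))"
    by (simp add: dm1 dm2)
  hence "sup (cmpl x) (inf (cmpl y) (cmpl z)) = inf (sup (cmpl x) (cmpl y)) (sup (cmpl x) (cmpl z))"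
    by (rule DD)
  hence "cmpl (sup (cmpl x) (inf (cmpl y) (cmpl z))) = cmpl (inf (sup (cmpl x) (cmpl y)) (sup (cmpl x) (cmpl z)))"
    by simp
  thus ?thesis by (simp add: dm1 dm2 cmpl_involutive)
qed

lemma grid:
  assumes h1: "c1 = sup (inf c1 x) (inf c1 y)"
    and h3: "inf x y = sup (inf (inf x y) c1) (inf (inf x y) c2)"
    and h2: "c2 = sup (inf c2 x) (inf c2 y)"
  shows "inf c1 c2 = sup (inf (inf c1 c2) x) (inf (inf c1 c2) y)"
proof -
  define A1 where "A1 = inf c1 x"
  define A2 where "A2 = inf c2 x"
  define P1 where "P1 = inf (inf x y) c1"
  define P2 where "P2 = inf (inf x y) c2"
  define Q where "Q = inf c1 c2"
  have s1: "Q \<le> inf (sup A1 y) (sup A2 y)"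
  proof -
    have "c1 \<le> sup A1 y" unfolding A1_def by (metis h1 inf.cobounded2 sup.mono order_refl)
    moreover have "c2 \<le> sup A2 y" unfolding A2_def by (metis h2 inf.cobounded2 sup.mono order_refl)
    ultimately show ?thesis unfolding Q_def by (meson inf_mono)
  qed
  have s2: "inf (sup A1 y) (sup A2 y) = sup y (inf A1 (sup A2 y))"
    using modular[of y "sup A2 y" A1] by (simp add: sup_commute)
  have s3: "inf x (sup A2 y) = sup A2 (inf x y)"
    using modular[of A2 x y] unfolding A2_def by (simp add: inf_commute)
  have s4: "inf A1 (sup A2 y) = inf A1 (sup A2 (inf x y))"
  proof -
    have "inf A1 (sup A2 y) = inf A1 (inf x (sup A2 y))"
      unfolding A1_def by (simp add: inf_assoc inf_left_commute)
    thus ?thesis using s3 by simp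
  qed
  have s5: "sup A2 (inf x y) = sup (sup A2 P2) P1"
    using h3 unfolding P1_def P2_def by (metis sup_assoc sup_commute sup_left_commute)
  have P1A1: "P1 \<le> A1" unfolding P1_def A1_def by (meson inf.cobounded1 inf.cobounded2 le_inf_iff order_trans)
  have s6: "inf A1 (sup (sup A2 P2) P1) = sup P1 (inf A1 (sup A2 P2))"
    using modular[of P1 A1 "sup A2 P2"] P1A1 by (simp add: inf_commute sup_commute)
  have s7: "inf A1 (sup A2 P2) \<le> inf Q x"
  proof -
    have "sup A2 P2 \<le> inf c2 x" unfolding A2_def P2_def
      by (simp add: le_infI1 le_infI2 inf_commute)
    thus ?thesis unfolding A1_def Q_def
      by (metis inf.cobounded1 inf.cobounded2 le_inf_iff order_trans)
  qed
  have P1y: "P1 \<le> y" unfolding P1_def by (simp add: le_infI1)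
  have s8: "Q \<le> sup (inf Q x) y"
  proof -
    have "Q \<le> sup y (sup P1 (inf A1 (sup A2 P2)))" using s1 s2 s4 s5 s6 by simp
    also have "\<dots> \<le> sup (inf Q x) y" using s7 P1y
      by (simp add: le_supI1 le_supI2 sup.coboundedI1 sup.coboundedI2)
    finally show ?thesis .
  qed
  have "Q = inf Q (sup (inf Q x) y)" using s8 by (simp add: inf.absorb1)
  also have "\<dots> = sup (inf Q x) (inf y Q)"
    using modular[of "inf Q x" Q y] by (simp add: inf_commute)
  finally show ?thesis unfolding Q_def by (simp add: inf_commute)
qed


lemma N:
  assumes "inf b (sup a (cmpl a)) = sup (inf b a) (inf b (cmpl a))"
  shows "inf (cmpl b) (sup a (cmpl a)) = sup (inf (cmpl b) a) (inf (cmpl b) (cmpl a))"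
proof -
  have "sup b (inf a (cmpl a)) = inf (sup b a) (sup b (cmpl a))" by (rule DD[OF assms])
  hence "cmpl (sup b (inf a (cmpl a))) = cmpl (inf (sup b a) (sup b (cmpl a)))" by simp
  hence "inf (cmpl b) (sup (cmpl a) a) = sup (inf (cmpl b) (cmpl a)) (inf (cmpl b) a)"
    by (simp add: dm1 dm2 cmpl_involutive)
  thus ?thesis by (simp add: sup_commute)
qed

lemma C3sym:
  assumes c1: "inf a (sup b (cmpl b)) = sup (inf a b) (inf a (cmpl b))"
    and c2: "inf b (sup a (cmpl a)) = sup (inf b a) (inf b (cmpl a))"
    and c3: "inf a (cmpl a) = sup (inf (inf a (cmpl a)) b) (inf (inf a (cmpl a)) (cmpl b))"
  shows "inf b (cmpl b) = sup (inf (inf b (cmpl b)) a) (inf (inf b (cmpl b)) (cmpl a))"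
proof -
  let ?u = "sup a (cmpl a)"
  have pu: "inf a (cmpl a) \<le> ?u" by (simp add: le_infI1)
  have qu: "inf b (cmpl b) \<le> ?u" using kleene_cond by blast
  have c2': "inf (cmpl b) ?u = sup (inf (cmpl b) a) (inf (cmpl b) (cmpl a))" by (rule N[OF c2])
  have au: "inf a ?u = a" by simp
  have au2: "inf (cmpl a) ?u = cmpl a" by (simp add: inf.absorb1)
  have e1: "inf (inf b ?u) a = inf b a" by (metis au inf_assoc inf_commute)
  have e2: "inf (inf b ?u) (cmpl a) = inf b (cmpl a)" by (metis au2 inf_assoc inf_commute)
  have e3: "inf (inf (cmpl b) ?u) a = inf (cmpl b) a" by (metis au inf_assoc inf_commute)
  have e4: "inf (inf (cmpl b) ?u) (cmpl a) = inf (cmpl b) (cmpl a)" by (metis au2 inf_assoc inf_commute)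
  have e5: "inf (inf a (cmpl a)) (inf b ?u) = inf (inf a (cmpl a)) b"
    using pu by (metis inf.absorb1 inf_assoc inf_commute)
  have e6: "inf (inf a (cmpl a)) (inf (cmpl b) ?u) = inf (inf a (cmpl a)) (cmpl b)"
    using pu by (metis inf.absorb1 inf_assoc inf_commute)
  have g: "inf (inf b ?u) (inf (cmpl b) ?u) = sup (inf (inf (inf b ?u) (inf (cmpl b) ?u)) a) (inf (inf (inf b ?u) (inf (cmpl b) ?u)) (cmpl a))"
    apply (rule grid)
    using c2 e1 e2 apply simp
    using c3 e5 e6 apply simp
    using c2' e3 e4 apply simp
    done
  have e7: "inf (inf b ?u) (inf (cmpl b) ?u) = inf b (cmpl b)"
    using qu by (metis inf.absorb1 inf_assoc inf_commute inf_left_commute inf_idem)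
  show ?thesis using g e7 by simp
qed

end

lemma comm_sym: "commutes (a::'a::modular_pseudo_kleene_lattice) b \<Longrightarrow> commutes b a"
  unfolding commutes_def using C3sym by blast

lemma comm_parts:
  fixes a b :: "'a::modular_pseudo_kleene_lattice"
  assumes "commutes a b"
  shows "inf a (sup b (cmpl b)) = sup (inf a b) (inf a (cmpl b))"
    and "inf b (sup a (cmpl a)) = sup (inf b a) (inf b (cmpl a))"
    and "inf a (cmpl a) = sup (inf (inf a (cmpl a)) b) (inf (inf a (cmpl a)) (cmpl b))"
proof -
  have all: "inf a (sup b (cmpl b)) = sup (inf a b) (inf a (cmpl b))
    \<and> inf b (sup a (cmpl a)) = sup (inf b a) (inf b (cmpl a))
    \<and> inf a (cmpl a) = sup (inf (inf a (cmpl a)) b) (inf (inf a (cmpl a)) (cmpl b))"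
    using assms unfolding commutes_def .
  show "inf a (sup b (cmpl b)) = sup (inf a b) (inf a (cmpl b))" using all by (rule conjunct1)
  show "inf b (sup a (cmpl a)) = sup (inf b a) (inf b (cmpl a))" using all[THEN conjunct2] by (rule conjunct1)
  show "inf a (cmpl a) = sup (inf (inf a (cmpl a)) b) (inf (inf a (cmpl a)) (cmpl b))" using all[THEN conjunct2] by (rule conjunct2)
qed

lemma comm_cb:
  fixes a b :: "'a::modular_pseudo_kleene_lattice"
  assumes "commutes a b" shows "commutes a (cmpl b)"
proof -
  note c1 = comm_parts(1)[OF assms]
  note c2 = comm_parts(2)[OF assms]
  note c3 = comm_parts(3)[OF assms]
  have i: "cmpl (cmpl b) = b" by (rule cmpl_involutive)
  have e1: "inf a (sup (cmpl b) (cmpl (cmpl b))) = sup (inf a (cmpl b)) (inf a (cmpl (cmpl b)))"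
    unfolding i by (metis c1 sup_commute)
  have e2: "inf (cmpl b) (sup a (cmpl a)) = sup (inf (cmpl b) a) (inf (cmpl b) (cmpl a))" by (rule N[OF c2])
  have e3: "inf a (cmpl a) = sup (inf (inf a (cmpl a)) (cmpl b)) (inf (inf a (cmpl a)) (cmpl (cmpl b)))"
    unfolding i by (metis c3 sup_commute)
  show ?thesis unfolding commutes_def using e1 e2 e3 by (intro conjI)
qed

lemma comm_ca:
  fixes a b :: "'a::modular_pseudo_kleene_lattice"
  assumes "commutes a b" shows "commutes (cmpl a) b"
proof -
  note c1 = comm_parts(1)[OF assms]
  note c2 = comm_parts(2)[OF assms]
  note c3 = comm_parts(3)[OF assms]
  have i: "cmpl (cmpl a) = a" by (rule cmpl_involutive)
  have sa: "sup (cmpl a) a = sup a (cmpl a)" by (rule sup_commute)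
  have ia: "inf (cmpl a) a = inf a (cmpl a)" by (rule inf_commute)
  have e1: "inf (cmpl a) (sup b (cmpl b)) = sup (inf (cmpl a) b) (inf (cmpl a) (cmpl b))" by (rule N[OF c1])
  have e2: "inf b (sup (cmpl a) (cmpl (cmpl a))) = sup (inf b (cmpl a)) (inf b (cmpl (cmpl a)))"
    unfolding i sa by (metis c2 sup_commute)
  have e3: "inf (cmpl a) (cmpl (cmpl a)) = sup (inf (inf (cmpl a) (cmpl (cmpl a))) b) (inf (inf (cmpl a) (cmpl (cmpl a))) (cmpl b))"
    unfolding i ia by (rule c3)
  show ?thesis unfolding commutes_def using e1 e2 e3 by (intro conjI)
qed

lemma comm5:
  fixes a b :: "'a::modular_pseudo_kleene_lattice"
  assumes "commutes a b"
  shows "inf (sup a (cmpl a)) (sup b (cmpl b))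
               = sup (inf (sup a (cmpl a)) b) (inf (sup a (cmpl a)) (cmpl b))"
proof -
  note c3o = comm_parts(3)[OF assms]
  obtain p where p_def: "p = inf a (cmpl a)" by simp
  have c3: "p = sup (inf p b) (inf p (cmpl b))"
    unfolding p_def by (rule c3o)
  have k: "p \<le> sup b (cmpl b)" unfolding p_def by (rule kleene_cond)
  have "inf p (sup b (cmpl b)) = p" using k by (rule inf.absorb1)
  hence d: "inf p (sup b (cmpl b)) = sup (inf p b) (inf p (cmpl b))" using c3 by (rule trans)
  have E: "sup p (inf b (cmpl b)) = inf (sup p b) (sup p (cmpl b))" by (rule DD[OF d])
  have L: "cmpl (sup p (inf b (cmpl b))) = inf (cmpl p) (sup (cmpl b) b)"
    by (simp only: dm1 dm2 cmpl_involutive)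
  have R: "cmpl (inf (sup p b) (sup p (cmpl b))) = sup (inf (cmpl p) (cmpl b)) (inf (cmpl p) b)"
    by (simp only: dm1 dm2 cmpl_involutive)
  have cp: "cmpl p = sup a (cmpl a)" unfolding p_def dm2 cmpl_involutive by (rule sup_commute)
  have X: "inf (cmpl p) (sup (cmpl b) b) = sup (inf (cmpl p) (cmpl b)) (inf (cmpl p) b)"
    using E L R by metis
  have sb: "sup (cmpl b) b = sup b (cmpl b)" by (rule sup_commute)
  show ?thesis using X unfolding cp sb by (metis sup_commute)
qed


theorem lemma4p13:
  fixes x y :: "'a::modular_pseudo_kleene_lattice"
  shows "(commutes x y \<longleftrightarrow> commutes y x)
       \<and> (commutes x y \<longleftrightarrow> commutes x (cmpl y))
       \<and> (commutes x y \<longleftrightarrow> commutes (cmpl x) y)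
       \<and> (commutes x y \<longleftrightarrow>
            (commutes x y \<and>
             inf (sup x (cmpl x)) (sup y (cmpl y))
               = sup (inf (sup x (cmpl x)) y) (inf (sup x (cmpl x)) (cmpl y))))"
proof -
  have 1: "commutes x y \<longleftrightarrow> commutes y x" using comm_sym by blast
  have 2: "commutes x y \<longleftrightarrow> commutes x (cmpl y)"
    by (metis comm_cb cmpl_involutive)
  have 3: "commutes x y \<longleftrightarrow> commutes (cmpl x) y"
    by (metis comm_ca cmpl_involutive)
  show ?thesis using 1 2 3 comm5[of x y] by blast
qed

end
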